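(* The functor $\tau\colon \Delta_{\mathbb{F}}^1\to\Omega$ preserves the surjective-injective and active-inert factorization systems.
   Context: $\Delta_{\mathbb{F}}^1$ is the full subcategory of Barwick's category $\Delta_{\mathbb{F}}$ (objects $([n], f\colon[n]\to\mathbb{F})$, $\mathbb{F}$ finite sets; morphisms $(\phi,\eta)$ with $\phi$ in $\Delta$, $\eta\colon f\to g\circ\phi$ with injective components and pullback naturality squares) on objects with $f(n)=\mathbf{1}$. A map $(\phi,\eta)$ is injective if $\phi$ is injective; surjective if $\phi$ is surjective and all $\eta_i$ are bijections; inert if $\phi$ is the inclusion of a subinterval; active if $\phi$ preserves endpoints and all $\eta_i$ are bijections. $\Omega$ is the dendroidal category (trees as polynomial endofunctors, per Kock), where inert maps are embeddings of subtrees and active maps send leaves bijectively to leaves and root to root. $\tau$ sends $([n],f)$ to the tree with edges $\coprod_{i=0}^n f(i)$ and vertices $\coprod_{i=1}^n f(i)$, the edge $x\in f(i)$ ($i<n$) entering the vertex $f^{i(i+1)}(x)$, and is determined on morphisms by the edge map given on $f(i)$ by $\eta_i\colon f(i)\to g(\phi(i))$. *)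

theory Defs
  imports Main
begin

text \<open>An object ([n], f : [n] -> F) of Delta_F: a functor from the poset [n] to finite
  sets is given by finite sets f(0),...,f(n) together with maps f(i) -> f(i+1).\<close>

record 'a dobj =
  dim :: nat
  fib :: "nat \<Rightarrow> 'a set"
  tr  :: "nat \<Rightarrow> 'a \<Rightarrow> 'a"

definition dF_obj :: "'a dobj \<Rightarrow> bool" where
  "dF_obj X \<longleftrightarrow> (\<forall>i\<le>dim X. finite (fib X i))
      \<and> (\<forall>i<dim X. tr X i ` fib X i \<subseteq> fib X (Suc i))"

definition dF1_obj :: "'a dobj \<Rightarrow> bool" where
  "dF1_obj X \<longleftrightarrow> dF_obj X \<and> (\<exists>u. fib X (dim X) = {u})"

fun fmap :: "'a dobj \<Rightarrow> nat \<Rightarrow> nat \<Rightarrow> 'a \<Rightarrow> 'a" where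
  "fmap X i 0 x = x"
| "fmap X i (Suc k) x = tr X (i + k) (fmap X i k x)"

definition fij :: "'a dobj \<Rightarrow> nat \<Rightarrow> nat \<Rightarrow> 'a \<Rightarrow> 'a" where
  "fij X i j = fmap X i (j - i)"

text \<open>A morphism (phi, eta) : X -> Y of Delta_F: phi : [m] -> [n] monotone,
  eta_i : f(i) -> g(phi i) injective, natural, with pullback naturality squares.
  (Naturality / pullback for consecutive squares; the general squares are composites.)\<close>
definition dF_mor :: "'a dobj \<Rightarrow> 'a dobj \<Rightarrow> (nat \<Rightarrow> nat) \<Rightarrow> (nat \<Rightarrow> 'a \<Rightarrow> 'a) \<Rightarrow> bool" where
  "dF_mor X Y \<phi> \<eta> \<longleftrightarrow>
     (\<forall>i\<le>dim X. \<phi> i \<le> dim Y)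
   \<and> (\<forall>i j. i \<le> j \<and> j \<le> dim X \<longrightarrow> \<phi> i \<le> \<phi> j)
   \<and> (\<forall>i\<le>dim X. \<eta> i ` fib X i \<subseteq> fib Y (\<phi> i) \<and> inj_on (\<eta> i) (fib X i))
   \<and> (\<forall>i<dim X. \<forall>x\<in>fib X i.
        \<eta> (Suc i) (tr X i x) = fij Y (\<phi> i) (\<phi> (Suc i)) (\<eta> i x))
   \<and> (\<forall>i<dim X. bij_betw (\<lambda>x. (tr X i x, \<eta> i x)) (fib X i)
        {(x', y). x' \<in> fib X (Suc i) \<and> y \<in> fib Y (\<phi> i)
                 \<and> \<eta> (Suc i) x' = fij Y (\<phi> i) (\<phi> (Suc i)) y})"

definition dF_injective :: "'a dobj \<Rightarrow> 'a dobj \<Rightarrow> (nat \<Rightarrow> nat) \<Rightarrow> (nat \<Rightarrow> 'a \<Rightarrow> 'a) \<Rightarrow> bool" where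
  "dF_injective X Y \<phi> \<eta> \<longleftrightarrow> inj_on \<phi> {0..dim X}"

definition dF_surjective :: "'a dobj \<Rightarrow> 'a dobj \<Rightarrow> (nat \<Rightarrow> nat) \<Rightarrow> (nat \<Rightarrow> 'a \<Rightarrow> 'a) \<Rightarrow> bool" where
  "dF_surjective X Y \<phi> \<eta> \<longleftrightarrow> \<phi> ` {0..dim X} = {0..dim Y}
      \<and> (\<forall>i\<le>dim X. bij_betw (\<eta> i) (fib X i) (fib Y (\<phi> i)))"

definition dF_inert :: "'a dobj \<Rightarrow> 'a dobj \<Rightarrow> (nat \<Rightarrow> nat) \<Rightarrow> (nat \<Rightarrow> 'a \<Rightarrow> 'a) \<Rightarrow> bool" where
  "dF_inert X Y \<phi> \<eta> \<longleftrightarrow> (\<exists>k. \<forall>i\<le>dim X. \<phi> i = i + k)"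

definition dF_active :: "'a dobj \<Rightarrow> 'a dobj \<Rightarrow> (nat \<Rightarrow> nat) \<Rightarrow> (nat \<Rightarrow> 'a \<Rightarrow> 'a) \<Rightarrow> bool" where
  "dF_active X Y \<phi> \<eta> \<longleftrightarrow> \<phi> 0 = 0 \<and> \<phi> (dim X) = dim Y
      \<and> (\<forall>i\<le>dim X. bij_betw (\<eta> i) (fib X i) (fib Y (\<phi> i)))"

record ('e, 'v) tree =
  edges :: "'e set"
  verts :: "'v set"
  out   :: "'v \<Rightarrow> 'e"
  inp   :: "'v \<Rightarrow> 'e set"

definition is_leaf :: "('e, 'v) tree \<Rightarrow> 'e \<Rightarrow> bool" where
  "is_leaf T e \<longleftrightarrow> e \<in> edges T \<and> (\<forall>v\<in>verts T. out T v \<noteq> e)"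

definition is_root :: "('e, 'v) tree \<Rightarrow> 'e \<Rightarrow> bool" where
  "is_root T e \<longleftrightarrow> e \<in> edges T \<and> (\<forall>v\<in>verts T. e \<notin> inp T v)"

text \<open>Classes of morphisms of Omega, expressed on the edge map h : S -> T
  (a morphism of Omega is determined by its map on edges).\<close>

definition om_injective :: "('e, 'v) tree \<Rightarrow> ('f, 'w) tree \<Rightarrow> ('e \<Rightarrow> 'f) \<Rightarrow> bool" where
  "om_injective S T h \<longleftrightarrow> inj_on h (edges S)"

definition om_surjective :: "('e, 'v) tree \<Rightarrow> ('f, 'w) tree \<Rightarrow> ('e \<Rightarrow> 'f) \<Rightarrow> bool" where
  "om_surjective S T h \<longleftrightarrow> h ` edges S = edges T"

definition om_active :: "('e, 'v) tree \<Rightarrow> ('f, 'w) tree \<Rightarrow> ('e \<Rightarrow> 'f) \<Rightarrow> bool" where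
  "om_active S T h \<longleftrightarrow> bij_betw h {e. is_leaf S e} {e. is_leaf T e}
      \<and> (\<forall>e. is_root S e \<longrightarrow> is_root T (h e))"

definition om_inert :: "('e, 'v) tree \<Rightarrow> ('f, 'w) tree \<Rightarrow> ('e \<Rightarrow> 'f) \<Rightarrow> bool" where
  "om_inert S T h \<longleftrightarrow> inj_on h (edges S)
      \<and> (\<exists>k. \<forall>v\<in>verts S. k v \<in> verts T \<and> out T (k v) = h (out S v)
                          \<and> inp T (k v) = h ` inp S v)"

definition tau :: "'a dobj \<Rightarrow> (nat \<times> 'a, nat \<times> 'a) tree" where
  "tau X = \<lparr> edges = {(i, x). i \<le> dim X \<and> x \<in> fib X i},
             verts = {(i, x). 1 \<le> i \<and> i \<le> dim X \<and> x \<in> fib X i},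
             out = (\<lambda>v. v),
             inp = (\<lambda>(i, y). {(i - 1, x) | x. x \<in> fib X (i - 1) \<and> tr X (i - 1) x = y}) \<rparr>"

definition tau_mor :: "(nat \<Rightarrow> nat) \<Rightarrow> (nat \<Rightarrow> 'a \<Rightarrow> 'a) \<Rightarrow> nat \<times> 'a \<Rightarrow> nat \<times> 'a" where
  "tau_mor \<phi> \<eta> = (\<lambda>(i, x). (\<phi> i, \<eta> i x))"

end

theory Submission
  imports Defs
begin

lemma tau_simps:
  "edges (tau X) = {(i, x). i \<le> dim X \<and> x \<in> fib X i}"
  "verts (tau X) = {(i, x). 1 \<le> i \<and> i \<le> dim X \<and> x \<in> fib X i}"
  "out (tau X) = (\<lambda>v. v)"
  "inp (tau X) (i, y) = {(i - 1, x) | x. x \<in> fib X (i - 1) \<and> tr X (i - 1) x = y}"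
  by (simp_all add: tau_def)

lemma leaf_tau: "is_leaf (tau X) e \<longleftrightarrow> (\<exists>x. e = (0, x) \<and> x \<in> fib X 0)"
  apply (cases e)
  apply (auto simp: is_leaf_def tau_simps)
  apply (case_tac a)
   apply auto
  done

lemma root_tau:
  assumes "dF_obj X"
  shows "is_root (tau X) e \<longleftrightarrow> (\<exists>x. e = (dim X, x) \<and> x \<in> fib X (dim X))"
proof (cases e)
  case (Pair i x)
  show ?thesis
  proof
    assume r: "is_root (tau X) e"
    hence ix: "i \<le> dim X" "x \<in> fib X i" using Pair by (auto simp: is_root_def tau_simps)
    have "i = dim X"
    proof (rule ccontr)
      assume "i \<noteq> dim X"
      hence lt: "i < dim X" using ix by simp
      hence "tr X i x \<in> fib X (Suc i)" using assms ix by (auto simp: dF_obj_def)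
      hence "(Suc i, tr X i x) \<in> verts (tau X)" using lt by (auto simp: tau_simps)
      moreover have "e \<in> inp (tau X) (Suc i, tr X i x)" using Pair ix by (simp add: tau_simps)
      ultimately show False using r by (auto simp: is_root_def)
    qed
    thus "\<exists>x. e = (dim X, x) \<and> x \<in> fib X (dim X)" using Pair ix by auto
  next
    assume "\<exists>x. e = (dim X, x) \<and> x \<in> fib X (dim X)"
    then show "is_root (tau X) e"
      by (auto simp: is_root_def tau_simps)
  qed
qed

theorem lemma4p4:
  fixes X Y :: "'a dobj" and \<phi> :: "nat \<Rightarrow> nat" and \<eta> :: "nat \<Rightarrow> 'a \<Rightarrow> 'a"
  assumes "dF1_obj X" and "dF1_obj Y" and "dF_mor X Y \<phi> \<eta>"
  shows "(dF_surjective X Y \<phi> \<eta> \<longrightarrow> om_surjective (tau X) (tau Y) (tau_mor \<phi> \<eta>))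
       \<and> (dF_injective X Y \<phi> \<eta> \<longrightarrow> om_injective (tau X) (tau Y) (tau_mor \<phi> \<eta>))
       \<and> (dF_active X Y \<phi> \<eta> \<longrightarrow> om_active (tau X) (tau Y) (tau_mor \<phi> \<eta>))
       \<and> (dF_inert X Y \<phi> \<eta> \<longrightarrow> om_inert (tau X) (tau Y) (tau_mor \<phi> \<eta>))"
proof -
  have oX: "dF_obj X" and oY: "dF_obj Y" using assms by (auto simp: dF1_obj_def)
  have m1: "\<And>i. i \<le> dim X \<Longrightarrow> \<phi> i \<le> dim Y"
    and m3: "\<And>i. i \<le> dim X \<Longrightarrow> \<eta> i ` fib X i \<subseteq> fib Y (\<phi> i) \<and> inj_on (\<eta> i) (fib X i)"
    and m4: "\<And>i x. i < dim X \<Longrightarrow> x \<in> fib X i \<Longrightarrow>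
        \<eta> (Suc i) (tr X i x) = fij Y (\<phi> i) (\<phi> (Suc i)) (\<eta> i x)"
    and m5: "\<And>i. i < dim X \<Longrightarrow> bij_betw (\<lambda>x. (tr X i x, \<eta> i x)) (fib X i)
        {(x', y). x' \<in> fib X (Suc i) \<and> y \<in> fib Y (\<phi> i)
                 \<and> \<eta> (Suc i) x' = fij Y (\<phi> i) (\<phi> (Suc i)) y}"
    using assms(3) unfolding dF_mor_def by blast+
  have S: "dF_surjective X Y \<phi> \<eta> \<longrightarrow> om_surjective (tau X) (tau Y) (tau_mor \<phi> \<eta>)"
  proof
    assume s: "dF_surjective X Y \<phi> \<eta>"
    show "om_surjective (tau X) (tau Y) (tau_mor \<phi> \<eta>)"
      unfolding om_surjective_def
    proof
      show "tau_mor \<phi> \<eta> ` edges (tau X) \<subseteq> edges (tau Y)"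
        using m1 m3 by (fastforce simp: tau_simps tau_mor_def)
      show "edges (tau Y) \<subseteq> tau_mor \<phi> \<eta> ` edges (tau X)"
      proof
        fix e assume "e \<in> edges (tau Y)"
        then obtain j y where e: "e = (j, y)" "j \<le> dim Y" "y \<in> fib Y j"
          by (auto simp: tau_simps)
        then obtain i where i: "i \<le> dim X" "\<phi> i = j" using s
          unfolding dF_surjective_def by (metis atLeastAtMost_iff imageE zero_le)
        hence "bij_betw (\<eta> i) (fib X i) (fib Y j)" using s by (auto simp: dF_surjective_def)
        then obtain x where "x \<in> fib X i" "\<eta> i x = y" using e
          by (metis bij_betw_iff_bijections)
        thus "e \<in> tau_mor \<phi> \<eta> ` edges (tau X)" using e i
          by (auto simp: tau_simps tau_mor_def image_iff intro!: bexI[of _ "(i, x)"])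
      qed
    qed
  qed
  have I: "dF_injective X Y \<phi> \<eta> \<longrightarrow> om_injective (tau X) (tau Y) (tau_mor \<phi> \<eta>)"
  proof
    assume s: "dF_injective X Y \<phi> \<eta>"
    show "om_injective (tau X) (tau Y) (tau_mor \<phi> \<eta>)"
      unfolding om_injective_def
    proof (rule inj_onI)
      fix a b assume a: "a \<in> edges (tau X)" and b: "b \<in> edges (tau X)"
        and eq: "tau_mor \<phi> \<eta> a = tau_mor \<phi> \<eta> b"
      obtain i x where A: "a = (i, x)" "i \<le> dim X" "x \<in> fib X i" using a by (auto simp: tau_simps)
      obtain j y where B: "b = (j, y)" "j \<le> dim X" "y \<in> fib X j" using b by (auto simp: tau_simps)
      have "\<phi> i = \<phi> j" using eq A B by (simp add: tau_mor_def)
      hence ij: "i = j" using s A B by (auto simp: dF_injective_def inj_on_def)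
      have "\<eta> i x = \<eta> i y" using eq A B ij by (simp add: tau_mor_def)
      hence "x = y" using m3[of i] A B ij by (auto simp: inj_on_def)
      thus "a = b" using A B ij by simp
    qed
  qed
  have A: "dF_active X Y \<phi> \<eta> \<longrightarrow> om_active (tau X) (tau Y) (tau_mor \<phi> \<eta>)"
  proof
    assume s: "dF_active X Y \<phi> \<eta>"
    have p0: "\<phi> 0 = 0" and pd: "\<phi> (dim X) = dim Y"
      and bj: "\<And>i. i \<le> dim X \<Longrightarrow> bij_betw (\<eta> i) (fib X i) (fib Y (\<phi> i))"
      using s by (auto simp: dF_active_def)
    have lX: "{e. is_leaf (tau X) e} = Pair 0 ` fib X 0" by (auto simp: leaf_tau)
    have lY: "{e. is_leaf (tau Y) e} = Pair 0 ` fib Y 0" by (auto simp: leaf_tau)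
    have b0: "bij_betw (\<eta> 0) (fib X 0) (fib Y 0)" using bj[of 0] p0 by simp
    have "bij_betw (tau_mor \<phi> \<eta>) (Pair (0::nat) ` fib X 0) (Pair (0::nat) ` fib Y 0)"
    proof -
      have b1: "bij_betw (Pair (0::nat) \<circ> \<eta> 0) (fib X 0) (Pair (0::nat) ` fib Y 0)"
        by (rule bij_betw_trans[OF b0]) (auto simp: bij_betw_def inj_on_def)
      have b2: "bij_betw (Pair (0::nat)) (fib X 0) (Pair (0::nat) ` fib X 0)"
        by (auto simp: bij_betw_def inj_on_def)
      have "bij_betw ((Pair (0::nat) \<circ> \<eta> 0) \<circ> inv_into (fib X 0) (Pair (0::nat))) (Pair (0::nat) ` fib X 0) (Pair (0::nat) ` fib Y 0)"
        by (rule bij_betw_trans[OF bij_betw_inv_into[OF b2] b1])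
      moreover have "\<And>e. e \<in> Pair (0::nat) ` fib X 0 \<Longrightarrow> ((Pair (0::nat) \<circ> \<eta> 0) \<circ> inv_into (fib X 0) (Pair (0::nat))) e = tau_mor \<phi> \<eta> e"
        by (auto simp: tau_mor_def p0 inv_into_f_eq inj_on_def)
      ultimately show ?thesis using bij_betw_cong by blast
    qed
    hence L: "bij_betw (tau_mor \<phi> \<eta>) {e. is_leaf (tau X) e} {e. is_leaf (tau Y) e}"
      using lX lY by simp
    have R: "\<forall>e. is_root (tau X) e \<longrightarrow> is_root (tau Y) (tau_mor \<phi> \<eta> e)"
      using m3[of "dim X"] pd by (auto simp: root_tau[OF oX] root_tau[OF oY] tau_mor_def)
    show "om_active (tau X) (tau Y) (tau_mor \<phi> \<eta>)" using L R by (simp add: om_active_def)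
  qed
  have N: "dF_inert X Y \<phi> \<eta> \<longrightarrow> om_inert (tau X) (tau Y) (tau_mor \<phi> \<eta>)"
  proof
    assume s: "dF_inert X Y \<phi> \<eta>"
    then obtain k where k: "\<And>i. i \<le> dim X \<Longrightarrow> \<phi> i = i + k" by (auto simp: dF_inert_def)
    have inj: "inj_on (tau_mor \<phi> \<eta>) (edges (tau X))"
      using I k unfolding dF_injective_def om_injective_def by (auto simp: inj_on_def)
    have V: "\<forall>v\<in>verts (tau X). tau_mor \<phi> \<eta> v \<in> verts (tau Y)
        \<and> out (tau Y) (tau_mor \<phi> \<eta> v) = tau_mor \<phi> \<eta> (out (tau X) v)
        \<and> inp (tau Y) (tau_mor \<phi> \<eta> v) = tau_mor \<phi> \<eta> ` inp (tau X) v"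
    proof
      fix v assume "v \<in> verts (tau X)"
      then obtain i x where v: "v = (i, x)" "1 \<le> i" "i \<le> dim X" "x \<in> fib X i"
        by (auto simp: tau_simps)
      have pi: "\<phi> i = i + k" using k v by simp
      have pi1: "\<phi> (i - 1) = i - 1 + k" using k v by simp
      have Si: "Suc (i - 1) = i" using v by simp
      have lt: "i - 1 < dim X" using v by simp
      have fijeq: "fij Y (\<phi> (i - 1)) (\<phi> i) = tr Y (i + k - 1)"
        using pi pi1 v by (simp add: fij_def Suc_diff_le fun_eq_iff)
      have vin: "tau_mor \<phi> \<eta> v \<in> verts (tau Y)"
        using v m1[of i] m3[of i] pi by (auto simp: tau_simps tau_mor_def)
      have "inp (tau Y) (tau_mor \<phi> \<eta> v) = tau_mor \<phi> \<eta> ` inp (tau X) v"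
      proof
        show "tau_mor \<phi> \<eta> ` inp (tau X) v \<subseteq> inp (tau Y) (tau_mor \<phi> \<eta> v)"
        proof
          fix e assume "e \<in> tau_mor \<phi> \<eta> ` inp (tau X) v"
          then obtain x' where x': "x' \<in> fib X (i - 1)" "tr X (i - 1) x' = x"
            "e = (\<phi> (i - 1), \<eta> (i - 1) x')"
            using v by (auto simp: tau_simps tau_mor_def)
          have "\<eta> i x = tr Y (i + k - 1) (\<eta> (i - 1) x')"
            using m4[OF lt x'(1)] x' Si fijeq by simp
          moreover have "\<eta> (i - 1) x' \<in> fib Y (i + k - 1)"
          proof -
            have "i - 1 \<le> dim X" using v by simp
            hence "\<eta> (i - 1) ` fib X (i - 1) \<subseteq> fib Y (\<phi> (i - 1))" using m3 by blast
            thus ?thesis using x'(1) pi1 v by auto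
          qed
          ultimately show "e \<in> inp (tau Y) (tau_mor \<phi> \<eta> v)"
            using x' v pi pi1 by (auto simp: tau_simps tau_mor_def)
        qed
        show "inp (tau Y) (tau_mor \<phi> \<eta> v) \<subseteq> tau_mor \<phi> \<eta> ` inp (tau X) v"
        proof
          fix e assume "e \<in> inp (tau Y) (tau_mor \<phi> \<eta> v)"
          then obtain y where y: "e = (i + k - 1, y)" "y \<in> fib Y (i + k - 1)"
            "tr Y (i + k - 1) y = \<eta> i x"
            using v pi by (auto simp: tau_simps tau_mor_def)
          have "(x, y) \<in> {(x', y). x' \<in> fib X (Suc (i - 1)) \<and> y \<in> fib Y (\<phi> (i - 1))
                 \<and> \<eta> (Suc (i - 1)) x' = fij Y (\<phi> (i - 1)) (\<phi> (Suc (i - 1))) y}"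
            using y v Si fijeq pi1 v by auto
          then obtain x' where x': "x' \<in> fib X (i - 1)" "(tr X (i - 1) x', \<eta> (i - 1) x') = (x, y)"
            using m5[OF lt] by (metis (no_types, lifting) bij_betw_iff_bijections)
          show "e \<in> tau_mor \<phi> \<eta> ` inp (tau X) v"
            using x' y v pi1
            by (auto simp: tau_simps tau_mor_def image_iff intro!: exI[of _ x'])
        qed
      qed
      thus "tau_mor \<phi> \<eta> v \<in> verts (tau Y)
        \<and> out (tau Y) (tau_mor \<phi> \<eta> v) = tau_mor \<phi> \<eta> (out (tau X) v)
        \<and> inp (tau Y) (tau_mor \<phi> \<eta> v) = tau_mor \<phi> \<eta> ` inp (tau X) v"
        using vin by (simp add: tau_simps)
    qed
    show "om_inert (tau X) (tau Y) (tau_mor \<phi> \<eta>)"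
      unfolding om_inert_def using inj V by blast
  qed
  show ?thesis using S I A N by blast
qed

end
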